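(* Let $\boldsymbol A,\boldsymbol B$ be $m\times l$ matrices with $\boldsymbol A^\top\boldsymbol A=\boldsymbol B^\top\boldsymbol B=\boldsymbol I_l$, and let $\boldsymbol M$ be an $l\times l$ positive definite matrix whose eigenvalues lie in $[\lambda,\kappa\lambda]$ for some $\lambda>0$, $\kappa\ge1$. If $\boldsymbol A^\top\boldsymbol B$ is a diagonal matrix with non-negative entries, then there is a constant $C$ depending only on $\kappa$ such that $$\|\boldsymbol A\boldsymbol M\boldsymbol A^\top-\boldsymbol B\boldsymbol M\boldsymbol B^\top\|_F\le C\lambda\|\boldsymbol A\boldsymbol A^\top-\boldsymbol B\boldsymbol B^\top\|_F .$$ *)

theory Defs
  imports "Jordan_Normal_Form.Matrix" "Jordan_Normal_Form.Char_Poly"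
begin

definition frobenius_norm :: "real mat \<Rightarrow> real" where
  "frobenius_norm X = sqrt (\<Sum>i<dim_row X. \<Sum>j<dim_col X. (X $$ (i,j))\<^sup>2)"

definition positive_definite_mat :: "nat \<Rightarrow> real mat \<Rightarrow> bool" where
  "positive_definite_mat n M \<longleftrightarrow> M \<in> carrier_mat n n \<and> transpose_mat M = M \<and>
     (\<forall>x \<in> carrier_vec n. x \<noteq> 0\<^sub>v n \<longrightarrow> x \<bullet> (M *\<^sub>v x) > 0)"

end

theory Submission
  imports Defs "HOL-Analysis.Function_Topology"
begin



lemma quad_disc:
  fixes al b be :: real
  assumes "\<And>t. al + 2*t*b + t^2*be \<ge> 0" "be \<ge> 0"
  shows "b^2 \<le> al * be"
proof (cases "be > 0")
  case True
  have "al + 2*(-b/be)*b + (-b/be)^2*be \<ge> 0" using assms(1) .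
  hence "al - b^2/be \<ge> 0" using True by (simp add: power2_eq_square field_simps)
  thus ?thesis using True by (simp add: field_simps)
next
  case False
  hence be: "be = 0" using assms(2) by simp
  show ?thesis
  proof (rule ccontr)
    assume "\<not> ?thesis"
    hence "b \<noteq> 0" using be by simp
    have "al + 2*(-(\<bar>al\<bar>+1)/(2*b))*b + (-(\<bar>al\<bar>+1)/(2*b))^2*be \<ge> 0" using assms(1) .
    moreover have "2*(-(\<bar>al\<bar>+1)/(2*b))*b = -(\<bar>al\<bar>+1)" using \<open>b\<noteq>0\<close> by simp
    ultimately have "al - (\<bar>al\<bar>+1) \<ge> 0" using be by simp
    thus False by simp
  qed
qed

definition qf :: "(nat \<Rightarrow> nat \<Rightarrow> real) \<Rightarrow> nat \<Rightarrow> (nat \<Rightarrow> real) \<Rightarrow> real" where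
  "qf a n x = (\<Sum>i<n. x i * (\<Sum>j<n. a i j * x j))"

lemma cont_coord: "continuous_on S (\<lambda>x::nat\<Rightarrow>real. x i)"
  by (rule continuous_on_subset[OF continuous_on_product_coordinates]) simp

lemma max_exists:
  fixes a :: "nat \<Rightarrow> nat \<Rightarrow> real"
  assumes "n > 0"
  shows "\<exists>x0. (\<Sum>i<n. (x0 i)^2) = 1 \<and> (\<forall>x. (\<Sum>i<n. (x i)^2) = 1 \<longrightarrow> qf a n x \<le> qf a n x0)"
proof -
  define F where "F = (\<lambda>i::nat. if i < n then {-1..1::real} else {0})"
  define S where "S = PiE UNIV F \<inter> {x. (\<Sum>i<n. (x i)^2) = 1}"
  have "compactin (product_topology (\<lambda>i. euclidean) UNIV) (PiE UNIV F)"
    by (subst compactin_PiE) (auto simp: F_def)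
  hence c1: "compact (PiE UNIV F :: (nat \<Rightarrow> real) set)"
    by (simp add: euclidean_product_topology)
  have cl: "closed {x::nat\<Rightarrow>real. (\<Sum>i<n. (x i)^2) = 1}"
    by (intro closed_Collect_eq continuous_intros cont_coord)
  have cS: "compact S" unfolding S_def using c1 cl by (rule compact_Int_closed)
  define e where "e = (\<lambda>i::nat. if i = 0 then 1::real else 0)"
  have "(\<Sum>i<n. (e i)^2) = (\<Sum>i<n. if i = 0 then 1 else 0)"
    by (rule sum.cong) (auto simp: e_def)
  also have "\<dots> = 1" using assms by simp
  finally have "e \<in> S" using assms unfolding S_def F_def by (auto simp: PiE_iff e_def)
  hence ne: "S \<noteq> {}" by auto
  have cq: "continuous_on S (qf a n)" unfolding qf_def
    by (intro continuous_intros cont_coord)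
  obtain x0 where x0: "x0 \<in> S" "\<And>y. y \<in> S \<Longrightarrow> qf a n y \<le> qf a n x0"
    using continuous_attains_sup[OF cS ne cq] by blast
  show ?thesis
  proof (intro exI conjI allI impI)
    show "(\<Sum>i<n. (x0 i)^2) = 1" using x0(1) unfolding S_def by auto
  next
    fix x :: "nat \<Rightarrow> real" assume x: "(\<Sum>i<n. (x i)^2) = 1"
    define y where "y = (\<lambda>i. if i < n then x i else 0)"
    have sy: "(\<Sum>i<n. (y i)^2) = 1" using x unfolding y_def by simp
    have "y \<in> S"
    proof -
      have "\<forall>i<n. \<bar>y i\<bar> \<le> 1"
      proof (intro allI impI)
        fix i assume i: "i < n"
        have "(y i)^2 \<le> (\<Sum>i<n. (y i)^2)"
          by (rule member_le_sum) (use i in auto)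
        thus "\<bar>y i\<bar> \<le> 1" using sy by (simp add: abs_square_le_1)
      qed
      thus ?thesis unfolding S_def F_def using sy by (auto simp: PiE_iff y_def abs_le_iff)
    qed
    moreover have "qf a n x = qf a n y" unfolding qf_def y_def by simp
    ultimately show "qf a n x \<le> qf a n x0" using x0(2) by simp
  qed
qed

definition bl :: "(nat \<Rightarrow> nat \<Rightarrow> real) \<Rightarrow> nat \<Rightarrow> (nat \<Rightarrow> real) \<Rightarrow> (nat \<Rightarrow> real) \<Rightarrow> real" where
  "bl a n y x = (\<Sum>i<n. y i * (\<Sum>j<n. a i j * x j))"

lemma bl_sym:
  assumes sym: "\<And>i j. i<n \<Longrightarrow> j<n \<Longrightarrow> a i j = a j i"
  shows "bl a n x y = bl a n y x"
proof -
  have "bl a n x y = (\<Sum>i<n. \<Sum>j<n. x i * a i j * y j)"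
    unfolding bl_def by (simp add: sum_distrib_left mult.assoc)
  also have "\<dots> = (\<Sum>j<n. \<Sum>i<n. x i * a i j * y j)" by (rule sum.swap)
  also have "\<dots> = (\<Sum>j<n. \<Sum>i<n. y j * a j i * x i)"
    by (intro sum.cong refl) (simp add: sym mult.commute)
  also have "\<dots> = bl a n y x"
    unfolding bl_def by (simp add: sum_distrib_left mult.assoc)
  finally show ?thesis .
qed

lemma qf_bl: "qf a n x = bl a n x x" unfolding qf_def bl_def by simp

lemma qf_expand:
  assumes sym: "\<And>i j. i<n \<Longrightarrow> j<n \<Longrightarrow> a i j = a j i"
  shows "qf a n (\<lambda>i. x i + t * y i) = qf a n x + 2*t*bl a n y x + t^2 * qf a n y"
proof -
  have "qf a n (\<lambda>i. x i + t * y i) = bl a n x x + t * bl a n x y + t * bl a n y x + t^2 * bl a n y y"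
    unfolding qf_def bl_def
    by (simp add: algebra_simps sum.distrib sum_distrib_left power2_eq_square)
  moreover have "bl a n x y = bl a n y x" by (rule bl_sym[OF sym])
  ultimately show ?thesis by (simp add: qf_bl algebra_simps)
qed

lemma qf_scale: "qf a n (\<lambda>i. t * x i) = t^2 * qf a n x"
  unfolding qf_def by (simp add: algebra_simps sum_distrib_left power2_eq_square)

lemma sumsq_zero:
  fixes n :: nat
  assumes "(\<Sum>i<n. (x i)^2) = (0::real)" "i < n"
  shows "x i = 0"
proof -
  have "\<forall>i\<in>{..<n}. (x i)^2 = 0"
    using assms(1) by (subst (asm) sum_nonneg_eq_0_iff) auto
  thus ?thesis using assms(2) by simp
qed

lemma qf_le_max:
  fixes a :: "nat \<Rightarrow> nat \<Rightarrow> real"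
  assumes mx: "\<And>x. (\<Sum>i<n. (x i)^2) = 1 \<Longrightarrow> qf a n x \<le> mu"
  shows "qf a n x \<le> mu * (\<Sum>i<n. (x i)^2)"
proof (cases "(\<Sum>i<n. (x i)^2) = 0")
  case True
  hence "\<forall>i<n. x i = 0" using sumsq_zero by blast
  hence "qf a n x = 0" unfolding qf_def by simp
  thus ?thesis using True by simp
next
  case False
  define s where "s = (\<Sum>i<n. (x i)^2)"
  have "s \<ge> 0" unfolding s_def by (simp add: sum_nonneg)
  hence s: "s > 0" using False unfolding s_def by linarith
  define y where "y = (\<lambda>i. (1 / sqrt s) * x i)"
  have "(\<Sum>i<n. (y i)^2) = (\<Sum>i<n. (x i)^2 / s)"
    unfolding y_def using s by (intro sum.cong refl) (simp add: power_mult_distrib power_divide)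
  also have "\<dots> = (\<Sum>i<n. (x i)^2) / s" by (simp add: sum_divide_distrib[symmetric])
  also have "\<dots> = 1" using s s_def by simp
  finally have "qf a n y \<le> mu" by (rule mx)
  moreover have "qf a n y = qf a n x / s" unfolding y_def qf_scale using s
    by (simp add: power_divide)
  ultimately have "qf a n x \<le> mu * s" using s by (simp add: field_simps)
  thus ?thesis using s_def by simp
qed

lemma row_bound:
  fixes a :: "nat \<Rightarrow> nat \<Rightarrow> real"
  assumes sym: "\<And>i j. i<n \<Longrightarrow> j<n \<Longrightarrow> a i j = a j i"
  and psd: "\<And>x. qf a n x \<ge> 0"
  and eig: "\<And>mu x. (\<exists>i<n. x i \<noteq> 0) \<Longrightarrow> (\<forall>i<n. (\<Sum>j<n. a i j * x j) = mu * x i) \<Longrightarrow> mu \<le> c"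
  and i: "i < n"
  shows "(\<Sum>j<n. (a i j)^2) \<le> c^2"
proof -
  have n: "n > 0" using i by simp
  obtain x0 where x0: "(\<Sum>i<n. (x0 i)^2) = 1"
    and mx: "\<And>x. (\<Sum>i<n. (x i)^2) = 1 \<Longrightarrow> qf a n x \<le> qf a n x0"
    using max_exists[OF n, of a] by blast
  define mu where "mu = qf a n x0"
  have qle: "\<And>x. qf a n x \<le> mu * (\<Sum>i<n. (x i)^2)"
    by (rule qf_le_max) (use mx mu_def in auto)
  define a' where "a' = (\<lambda>i j. (if i = j then mu else 0) - a i j)"
  have sym': "\<And>i j. i<n \<Longrightarrow> j<n \<Longrightarrow> a' i j = a' j i" unfolding a'_def using sym by auto
  have row': "\<And>x i. i<n \<Longrightarrow> (\<Sum>j<n. a' i j * x j) = mu * x i - (\<Sum>j<n. a i j * x j)"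
  proof -
    fix x :: "nat \<Rightarrow> real" and i assume i: "i < n"
    have "(\<Sum>j<n. a' i j * x j) = (\<Sum>j<n. (if j = i then mu * x j else 0) - a i j * x j)"
      unfolding a'_def by (intro sum.cong refl) (auto simp: left_diff_distrib)
    also have "\<dots> = mu * x i - (\<Sum>j<n. a i j * x j)" using i by (simp add: sum_subtractf)
    finally show "(\<Sum>j<n. a' i j * x j) = mu * x i - (\<Sum>j<n. a i j * x j)" .
  qed
  have qa': "\<And>x. qf a' n x = mu * (\<Sum>i<n. (x i)^2) - qf a n x"
  proof -
    fix x :: "nat \<Rightarrow> real"
    have "qf a' n x = (\<Sum>i<n. x i * (mu * x i - (\<Sum>j<n. a i j * x j)))"
      unfolding qf_def by (intro sum.cong refl) (simp add: row')
    also have "\<dots> = mu * (\<Sum>i<n. (x i)^2) - qf a n x"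
      unfolding qf_def by (simp add: right_diff_distrib sum_subtractf sum_distrib_left power2_eq_square mult_ac)
    finally show "qf a' n x = mu * (\<Sum>i<n. (x i)^2) - qf a n x" .
  qed
  have psd': "\<And>x. qf a' n x \<ge> 0" using qa' qle by simp
  have q0: "qf a' n x0 = 0" using qa' x0 mu_def by simp
  define w where "w = (\<lambda>i. \<Sum>j<n. a' i j * x0 j)"
  have "(bl a' n w x0)^2 \<le> 0 * qf a' n w"
  proof (rule quad_disc)
    fix t
    show "0 + 2*t*bl a' n w x0 + t^2 * qf a' n w \<ge> 0"
      using psd'[of "\<lambda>i. x0 i + t * w i"] qf_expand[OF sym', where x=x0 and t=t and y=w] q0 by simp
  qed (rule psd')
  hence "bl a' n w x0 = 0" by simp
  hence "(\<Sum>i<n. (w i)^2) = 0" unfolding bl_def w_def by (simp add: power2_eq_square)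
  hence w0: "\<And>i. i < n \<Longrightarrow> w i = 0" using sumsq_zero by blast
  have "mu \<le> c"
  proof (rule eig)
    show "\<exists>i<n. x0 i \<noteq> 0"
    proof (rule ccontr)
      assume "\<not> (\<exists>i<n. x0 i \<noteq> 0)"
      hence "(\<Sum>i<n. (x0 i)^2) = 0" by simp
      thus False using x0 by simp
    qed
    show "\<forall>i<n. (\<Sum>j<n. a i j * x0 j) = mu * x0 i"
    proof (intro allI impI)
      fix i assume i: "i < n"
      have "w i = mu * x0 i - (\<Sum>j<n. a i j * x0 j)"
        unfolding w_def using i by (rule row')
      thus "(\<Sum>j<n. a i j * x0 j) = mu * x0 i" using w0[OF i] by simp
    qed
  qed
  have qc: "\<And>x. qf a n x \<le> c * (\<Sum>i<n. (x i)^2)"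
  proof -
    fix x
    have "qf a n x \<le> mu * (\<Sum>i<n. (x i)^2)" by (rule qle)
    also have "\<dots> \<le> c * (\<Sum>i<n. (x i)^2)"
      using \<open>mu \<le> c\<close> by (intro mult_right_mono sum_nonneg) auto
    finally show "qf a n x \<le> c * (\<Sum>i<n. (x i)^2)" .
  qed
  define e where "e = (\<lambda>j. if j = i then 1 else (0::real))"
  define y where "y = (\<lambda>j. a i j)"
  define R where "R = (\<Sum>j<n. (a i j)^2)"
  have dl: "\<And>f. (\<Sum>j<n. f j * e j) = f i"
  proof -
    fix f :: "nat \<Rightarrow> real"
    have "(\<Sum>j<n. f j * e j) = (\<Sum>j<n. if j = i then f i else 0)"
      by (rule sum.cong) (auto simp: e_def)
    thus "(\<Sum>j<n. f j * e j) = f i" using i by simp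
  qed
  have dr: "\<And>f. (\<Sum>j<n. e j * f j) = f i"
    using dl by (simp add: mult.commute)
  have qe: "qf a n e = a i i" unfolding qf_def by (simp add: dl dr)
  have ble: "bl a n y e = R" unfolding bl_def y_def R_def
    by (simp add: dl power2_eq_square sym i)
  have sqe: "(\<Sum>j<n. (e j)^2) = 1" using dl[of e] by (simp add: power2_eq_square e_def)
  have "R^2 \<le> qf a n e * qf a n y"
  proof (rule quad_disc)
    fix t
    show "qf a n e + 2*t*R + t^2 * qf a n y \<ge> 0"
      using psd[of "\<lambda>j. e j + t * y j"] qf_expand[OF sym, where x=e and t=t and y=y] ble by simp
  qed (rule psd)
  also have "\<dots> \<le> c * (c * R)"
  proof (rule mult_mono)
    show "qf a n e \<le> c" using qc[of e] sqe by simp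
    show "qf a n y \<le> c * R" using qc[of y] unfolding y_def R_def .
    show "0 \<le> c" using qc[of e] psd[of e] sqe by simp
    show "0 \<le> qf a n y" by (rule psd)
  qed
  finally have RR: "R^2 \<le> c^2 * R" by (simp add: power2_eq_square mult.assoc)
  have "R \<ge> 0" unfolding R_def by (simp add: sum_nonneg)
  show ?thesis
  proof (cases "R = 0")
    case True
    thus ?thesis unfolding R_def by simp
  next
    case False
    with \<open>R \<ge> 0\<close> have "R > 0" by simp
    with RR show ?thesis unfolding R_def[symmetric] by (simp add: power2_eq_square)
  qed
qed


definition tr :: "real mat \<Rightarrow> real" where
  "tr X = (\<Sum>i<dim_row X. X $$ (i,i))"

lemma mult_entry:
  assumes "X \<in> carrier_mat r k" "Y \<in> carrier_mat k c" "i < r" "j < c"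
  shows "(X * Y) $$ (i,j) = (\<Sum>p<k. X $$ (i,p) * Y $$ (p,j))"
  using assms by (simp add: scalar_prod_def atLeast0LessThan)

lemma tr_mult:
  assumes "X \<in> carrier_mat n k" "Y \<in> carrier_mat k n"
  shows "tr (X * Y) = (\<Sum>i<n. \<Sum>p<k. X $$ (i,p) * Y $$ (p,i))"
proof -
  have "dim_row (X*Y) = n" using assms by simp
  thus ?thesis unfolding tr_def
    by (intro trans[OF sum.cong[OF _ mult_entry[OF assms]]]) auto
qed

lemma tr_comm:
  assumes "X \<in> carrier_mat n k" "Y \<in> carrier_mat k n"
  shows "tr (X * Y) = tr (Y * X)"
proof -
  have "tr (X * Y) = (\<Sum>i<n. \<Sum>p<k. X $$ (i,p) * Y $$ (p,i))" by (rule tr_mult[OF assms])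
  also have "\<dots> = (\<Sum>p<k. \<Sum>i<n. Y $$ (p,i) * X $$ (i,p))"
    by (subst sum.swap) (simp add: mult.commute)
  also have "\<dots> = tr (Y * X)" by (rule tr_mult[OF assms(2,1), symmetric])
  finally show ?thesis .
qed

lemma tr_minus:
  assumes "X \<in> carrier_mat n n" "Y \<in> carrier_mat n n"
  shows "tr (X - Y) = tr X - tr Y"
  unfolding tr_def using assms by (simp add: sum_subtractf)

lemma tr_one: "tr (1\<^sub>m n) = real n"
  unfolding tr_def by simp

lemma frob_sq:
  assumes "X \<in> carrier_mat r c"
  shows "(frobenius_norm X)^2 = tr (X * transpose_mat X)"
proof -
  have "(frobenius_norm X)^2 = (\<Sum>i<r. \<Sum>j<c. (X $$ (i,j))^2)"
    unfolding frobenius_norm_def using assms by (simp add: sum_nonneg)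
  also have "\<dots> = tr (X * transpose_mat X)"
    using assms by (subst tr_mult[of _ r c]) (auto simp: power2_eq_square)
  finally show ?thesis .
qed

lemma diag_right:
  assumes D: "D \<in> carrier_mat k k" "diagonal_mat D" and X: "X \<in> carrier_mat r k"
    and ij: "i < r" "j < k"
  shows "(X * D) $$ (i,j) = X $$ (i,j) * D $$ (j,j)"
proof -
  have "(X * D) $$ (i,j) = (\<Sum>p<k. X $$ (i,p) * D $$ (p,j))" by (rule mult_entry[OF X D(1) ij])
  also have "\<dots> = (\<Sum>p<k. if p = j then X $$ (i,j) * D $$ (j,j) else 0)"
    using D ij unfolding diagonal_mat_def by (intro sum.cong refl) auto
  also have "\<dots> = X $$ (i,j) * D $$ (j,j)" using ij by simp
  finally show ?thesis .
qed

lemma diag_left: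
  assumes D: "D \<in> carrier_mat r r" "diagonal_mat D" and X: "X \<in> carrier_mat r k"
    and ij: "i < r" "j < k"
  shows "(D * X) $$ (i,j) = D $$ (i,i) * X $$ (i,j)"
proof -
  have "(D * X) $$ (i,j) = (\<Sum>p<r. D $$ (i,p) * X $$ (p,j))" by (rule mult_entry[OF D(1) X ij])
  also have "\<dots> = (\<Sum>p<r. if p = i then D $$ (i,i) * X $$ (i,j) else 0)"
    using D ij unfolding diagonal_mat_def by (intro sum.cong refl) auto
  also have "\<dots> = D $$ (i,i) * X $$ (i,j)" using ij by simp
  finally show ?thesis .
qed

lemma tr_diag4:
  assumes M: "M \<in> carrier_mat l l" and N: "N \<in> carrier_mat l l"
    and D: "D \<in> carrier_mat l l" "diagonal_mat D"
    and E: "E \<in> carrier_mat l l" "diagonal_mat E"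
  shows "tr (M * (D * (N * E))) = (\<Sum>i<l. \<Sum>p<l. M $$ (i,p) * D $$ (p,p) * N $$ (p,i) * E $$ (i,i))"
proof -
  have "tr (M * (D * (N * E))) = (\<Sum>i<l. \<Sum>p<l. M $$ (i,p) * (D * (N * E)) $$ (p,i))"
    by (rule tr_mult) (use M N D E in auto)
  also have "\<dots> = (\<Sum>i<l. \<Sum>p<l. M $$ (i,p) * D $$ (p,p) * N $$ (p,i) * E $$ (i,i))"
  proof (intro sum.cong refl)
    fix i p assume "i \<in> {..<l}" "p \<in> {..<l}"
    hence ip: "i < l" "p < l" by auto
    have "(D * (N * E)) $$ (p,i) = D $$ (p,p) * (N * E) $$ (p,i)"
      by (rule diag_left[OF D]) (use N E ip in auto)
    also have "(N * E) $$ (p,i) = N $$ (p,i) * E $$ (i,i)"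
      by (rule diag_right[OF E N ip(2,1)])
    finally show "M $$ (i,p) * (D * (N * E)) $$ (p,i) = M $$ (i,p) * D $$ (p,p) * N $$ (p,i) * E $$ (i,i)"
      by simp
  qed
  finally show ?thesis .
qed

lemma tr_diag2:
  assumes D: "D \<in> carrier_mat l l" "diagonal_mat D"
    and E: "E \<in> carrier_mat l l" "diagonal_mat E"
  shows "tr (D * E) = (\<Sum>i<l. D $$ (i,i) * E $$ (i,i))"
proof -
  have "dim_row (D*E) = l" using D by simp
  thus ?thesis unfolding tr_def
    by (intro trans[OF sum.cong[OF _ diag_left[OF D E(1)]]]) auto
qed

lemma diagonal_transpose: "diagonal_mat D \<Longrightarrow> diagonal_mat (transpose_mat D)"
  unfolding diagonal_mat_def by auto

lemma pw:
  fixes x y :: real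
  assumes "0 \<le> x" "x \<le> 1" "0 \<le> y" "y \<le> 1"
  shows "1 - x * y \<le> (1 - x^2) + (1 - y^2)"
proof (cases "x \<le> y")
  case True
  hence "x * x \<le> x * y" using assms by (simp add: mult_left_mono)
  moreover have "y^2 \<le> 1" using assms by (simp add: power_le_one)
  ultimately show ?thesis by (simp add: power2_eq_square)
next
  case False
  hence "y * y \<le> x * y" using assms by (simp add: mult_right_mono)
  moreover have "x^2 \<le> 1" using assms by (simp add: power_le_one)
  ultimately show ?thesis by (simp add: power2_eq_square)
qed

theorem mainTheorem18:
  fixes \<kappa> :: real
  assumes "\<kappa> \<ge> 1"
  shows "\<exists>C::real. \<forall>(m::nat) (l::nat) (A::real mat) (B::real mat) (M::real mat) (lam::real).
    A \<in> carrier_mat m l \<longrightarrow> B \<in> carrier_mat m l \<longrightarrow>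
    transpose_mat A * A = 1\<^sub>m l \<longrightarrow> transpose_mat B * B = 1\<^sub>m l \<longrightarrow>
    positive_definite_mat l M \<longrightarrow> lam > 0 \<longrightarrow>
    (\<forall>k. eigenvalue M k \<longrightarrow> lam \<le> k \<and> k \<le> \<kappa> * lam) \<longrightarrow>
    diagonal_mat (transpose_mat A * B) \<longrightarrow>
    (\<forall>i<l. (transpose_mat A * B) $$ (i,i) \<ge> 0) \<longrightarrow>
    frobenius_norm (A * M * transpose_mat A - B * M * transpose_mat B)
      \<le> C * lam * frobenius_norm (A * transpose_mat A - B * transpose_mat B)"
proof (rule exI[of _ "2*\<kappa>"], intro allI impI)
  fix m l :: nat and A B M :: "real mat" and lam :: real
  assume A: "A \<in> carrier_mat m l" and B: "B \<in> carrier_mat m l"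
    and AA: "transpose_mat A * A = 1\<^sub>m l" and BB: "transpose_mat B * B = 1\<^sub>m l"
    and pd: "positive_definite_mat l M" and lam: "lam > 0"
    and ev: "\<forall>k. eigenvalue M k \<longrightarrow> lam \<le> k \<and> k \<le> \<kappa> * lam"
    and dg: "diagonal_mat (transpose_mat A * B)"
    and nn: "\<forall>i<l. (transpose_mat A * B) $$ (i,i) \<ge> 0"
  define c where "c = \<kappa> * lam"
  have c0: "c \<ge> 0" unfolding c_def using assms lam by simp
  have M: "M \<in> carrier_mat l l" and MT: "transpose_mat M = M"
    and pdv: "\<And>x. x \<in> carrier_vec l \<Longrightarrow> x \<noteq> 0\<^sub>v l \<Longrightarrow> x \<bullet> (M *\<^sub>v x) > 0"
    using pd unfolding positive_definite_mat_def by auto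
  have symM: "\<And>i j. i < l \<Longrightarrow> j < l \<Longrightarrow> M $$ (i,j) = M $$ (j,i)"
  proof -
    fix i j assume "i < l" "j < l"
    hence "transpose_mat M $$ (i,j) = M $$ (j,i)" using M by simp
    thus "M $$ (i,j) = M $$ (j,i)" using MT by simp
  qed
  define a where "a = (\<lambda>i j. M $$ (i,j))"
  have qv: "\<And>x. vec l x \<bullet> (M *\<^sub>v vec l x) = qf a l x"
  proof -
    fix x :: "nat \<Rightarrow> real"
    have "vec l x \<bullet> (M *\<^sub>v vec l x) = (\<Sum>i<l. vec l x $ i * (M *\<^sub>v vec l x) $ i)"
      unfolding scalar_prod_def using M by (simp add: atLeast0LessThan)
    also have "\<dots> = qf a l x" unfolding qf_def a_def
    proof (intro sum.cong refl)
      fix i assume "i \<in> {..<l}"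
      thus "vec l x $ i * (M *\<^sub>v vec l x) $ i = x i * (\<Sum>j<l. M $$ (i, j) * x j)"
        using M by (simp add: scalar_prod_def atLeast0LessThan)
    qed
    finally show "vec l x \<bullet> (M *\<^sub>v vec l x) = qf a l x" .
  qed
  have psd: "\<And>x. qf a l x \<ge> 0"
  proof -
    fix x :: "nat \<Rightarrow> real"
    show "qf a l x \<ge> 0"
    proof (cases "vec l x = 0\<^sub>v l")
      case True
      hence "\<And>i. i < l \<Longrightarrow> x i = 0" by (metis index_vec index_zero_vec(1))
      hence "qf a l x = 0" unfolding qf_def by simp
      thus ?thesis by simp
    next
      case False
      thus ?thesis using pdv[of "vec l x"] qv[of x] by simp
    qed
  qed
  have eig: "\<And>mu x. (\<exists>i<l. x i \<noteq> 0) \<Longrightarrow> (\<forall>i<l. (\<Sum>j<l. a i j * x j) = mu * x i) \<Longrightarrow> mu \<le> c"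
  proof -
    fix mu and x :: "nat \<Rightarrow> real"
    assume nz: "\<exists>i<l. x i \<noteq> 0" and eq: "\<forall>i<l. (\<Sum>j<l. a i j * x j) = mu * x i"
    have "eigenvector M (vec l x) mu" unfolding eigenvector_def
    proof (intro conjI)
      show "vec l x \<in> carrier_vec (dim_row M)" using M by simp
      show "vec l x \<noteq> 0\<^sub>v (dim_row M)" using M nz by (metis index_vec index_zero_vec(1) carrier_matD(1))
      show "M *\<^sub>v vec l x = mu \<cdot>\<^sub>v vec l x"
      proof (rule eq_vecI)
        fix i assume "i < dim_vec (mu \<cdot>\<^sub>v vec l x)"
        hence i: "i < l" by simp
        have "(M *\<^sub>v vec l x) $ i = (\<Sum>j<l. a i j * x j)"
          using M i unfolding a_def by (simp add: scalar_prod_def atLeast0LessThan)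
        also have "\<dots> = mu * x i" using eq i by simp
        finally show "(M *\<^sub>v vec l x) $ i = (mu \<cdot>\<^sub>v vec l x) $ i" using i by simp
      qed (use M in simp)
    qed
    hence "eigenvalue M mu" unfolding eigenvalue_def by blast
    thus "mu \<le> c" using ev unfolding c_def by blast
  qed
  have Rb: "\<And>i. i < l \<Longrightarrow> (\<Sum>j<l. (M $$ (i,j))^2) \<le> c^2"
  proof -
    fix i assume i: "i < l"
    have "(\<Sum>j<l. (a i j)^2) \<le> c^2"
      by (rule row_bound[OF _ psd eig i]) (simp add: a_def symM)
    thus "(\<Sum>j<l. (M $$ (i,j))^2) \<le> c^2" by (simp add: a_def)
  qed
  show "frobenius_norm (A * M * transpose_mat A - B * M * transpose_mat B)
      \<le> 2 * \<kappa> * lam * frobenius_norm (A * transpose_mat A - B * transpose_mat B)"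
    (is "frobenius_norm ?X \<le> _ * frobenius_norm ?Y")
  proof -
  define TA where "TA = transpose_mat A"
  define TB where "TB = transpose_mat B"
  define D where "D = TA * B"
  define TD where "TD = TB * A"
  define d where "d = (\<lambda>i. D $$ (i,i))"
  have TAc: "TA \<in> carrier_mat l m" and TBc: "TB \<in> carrier_mat l m" unfolding TA_def TB_def using A B by auto
  have Dc: "D \<in> carrier_mat l l" and TDc: "TD \<in> carrier_mat l l" unfolding D_def TD_def using TAc TBc A B by auto
  have Dd: "diagonal_mat D" using dg unfolding D_def TA_def .
  have TDeq: "TD = transpose_mat D" unfolding TD_def D_def TA_def TB_def
    using transpose_mult[of "transpose_mat A" l m B l] A B by simp
  have TDd: "diagonal_mat TD" unfolding TDeq using Dd by (rule diagonal_transpose)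
  have TDi: "\<And>i. i < l \<Longrightarrow> TD $$ (i,i) = d i" unfolding TDeq d_def using Dc by simp
  have AA': "TA * A = 1\<^sub>m l" and BB': "TB * B = 1\<^sub>m l" using AA BB unfolding TA_def TB_def .
  have canA: "\<And>(Z::real mat) k. Z \<in> carrier_mat l k \<Longrightarrow> TA * (A * Z) = Z"
  proof -
    fix Z :: "real mat" and k assume Z: "Z \<in> carrier_mat l k"
    have "TA * (A * Z) = (TA * A) * Z" using assoc_mult_mat[OF TAc A Z] by simp
    thus "TA * (A * Z) = Z" using AA' Z by simp
  qed
  have canB: "\<And>(Z::real mat) k. Z \<in> carrier_mat l k \<Longrightarrow> TB * (B * Z) = Z"
  proof -
    fix Z :: "real mat" and k assume Z: "Z \<in> carrier_mat l k"
    have "TB * (B * Z) = (TB * B) * Z" using assoc_mult_mat[OF TBc B Z] by simp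
    thus "TB * (B * Z) = Z" using BB' Z by simp
  qed
  have cD: "\<And>(Z::real mat) k. Z \<in> carrier_mat l k \<Longrightarrow> TA * (B * Z) = D * Z"
  proof -
    fix Z :: "real mat" and k assume Z: "Z \<in> carrier_mat l k"
    show "TA * (B * Z) = D * Z" unfolding D_def using assoc_mult_mat[OF TAc B Z] by simp
  qed
  have cTD: "\<And>(Z::real mat) k. Z \<in> carrier_mat l k \<Longrightarrow> TB * (A * Z) = TD * Z"
  proof -
    fix Z :: "real mat" and k assume Z: "Z \<in> carrier_mat l k"
    show "TB * (A * Z) = TD * Z" unfolding TD_def using assoc_mult_mat[OF TBc A Z] by simp
  qed
  define P where "P = A * (M * TA)"
  define Q where "Q = B * (M * TB)"
  have XPQ: "?X = P - Q" unfolding P_def Q_def TA_def TB_def using A B M by simp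
  have Pc: "P \<in> carrier_mat m m" and Qc: "Q \<in> carrier_mat m m" unfolding P_def Q_def using A B M TAc TBc by auto
  have TP: "transpose_mat P = P" unfolding P_def TA_def using A M MT
    by (simp add: transpose_mult[of _ m l _ m] transpose_mult[of M l l _ m])
  have TQ: "transpose_mat Q = Q" unfolding Q_def TB_def using B M MT
    by (simp add: transpose_mult[of _ m l _ m] transpose_mult[of M l l _ m])
  have "(frobenius_norm ?X)^2 = tr ((P - Q) * (P - Q))"
    unfolding XPQ using frob_sq[of "P - Q" m m] minus_carrier_mat[OF Qc] Pc Qc TP TQ by (simp add: transpose_minus[OF Pc Qc])
  also have "(P - Q) * (P - Q) = (P * P - P * Q) - (Q * P - Q * Q)"
    using minus_mult_distrib_mat[OF Pc Qc minus_carrier_mat[OF Qc]]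
      mult_minus_distrib_mat[OF Pc Pc Qc] mult_minus_distrib_mat[OF Qc Pc Qc] by simp
  also have "tr \<dots> = (tr (P * P) - tr (P * Q)) - (tr (Q * P) - tr (Q * Q))"
    using tr_minus[OF minus_carrier_mat[OF mult_carrier_mat[OF Pc Qc]] minus_carrier_mat[OF mult_carrier_mat[OF Qc Qc]]]
      tr_minus[OF mult_carrier_mat[OF Pc Pc] mult_carrier_mat[OF Pc Qc]]
      tr_minus[OF mult_carrier_mat[OF Qc Pc] mult_carrier_mat[OF Qc Qc]] by simp
  finally have FX1: "(frobenius_norm ?X)^2 = (tr (P * P) - tr (P * Q)) - (tr (Q * P) - tr (Q * Q))" .
  have MTA: "M * TA \<in> carrier_mat l m" using M TAc by (rule mult_carrier_mat)
  have MTB: "M * TB \<in> carrier_mat l m" using M TBc by (rule mult_carrier_mat)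
  have AMTA: "A * (M * TA) \<in> carrier_mat m m" using A MTA by (rule mult_carrier_mat)
  have BMTB: "B * (M * TB) \<in> carrier_mat m m" using B MTB by (rule mult_carrier_mat)
  have "P * P = A * (M * (TA * (A * (M * TA))))" unfolding P_def
    using assoc_mult_mat[OF A MTA AMTA] assoc_mult_mat[OF M TAc AMTA] by simp
  also have "\<dots> = A * (M * (M * TA))" using canA[OF MTA] by simp
  finally have "tr (P * P) = tr (A * (M * (M * TA)))" by simp
  also have "\<dots> = tr ((M * (M * TA)) * A)"
    by (rule tr_comm[OF A]) (rule mult_carrier_mat[OF M MTA])
  also have "(M * (M * TA)) * A = M * (M * (TA * A))"
    using assoc_mult_mat[OF M MTA A] assoc_mult_mat[OF M TAc A] by simp
  also have "\<dots> = M * M" using AA' M by simp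
  finally have PP: "tr (P * P) = tr (M * M)" .
  have "Q * Q = B * (M * (TB * (B * (M * TB))))" unfolding Q_def
    using assoc_mult_mat[OF B MTB BMTB] assoc_mult_mat[OF M TBc BMTB] by simp
  also have "\<dots> = B * (M * (M * TB))" using canB[OF MTB] by simp
  finally have "tr (Q * Q) = tr (B * (M * (M * TB)))" by simp
  also have "\<dots> = tr ((M * (M * TB)) * B)"
    by (rule tr_comm[OF B]) (rule mult_carrier_mat[OF M MTB])
  also have "(M * (M * TB)) * B = M * (M * (TB * B))"
    using assoc_mult_mat[OF M MTB B] assoc_mult_mat[OF M TBc B] by simp
  also have "\<dots> = M * M" using BB' M by simp
  finally have QQ: "tr (Q * Q) = tr (M * M)" .
  have DMTB: "D * (M * TB) \<in> carrier_mat l m" using Dc MTB by (rule mult_carrier_mat)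
  have TDMTA: "TD * (M * TA) \<in> carrier_mat l m" using TDc MTA by (rule mult_carrier_mat)
  have "P * Q = A * (M * (TA * (B * (M * TB))))" unfolding P_def Q_def
    using assoc_mult_mat[OF A MTA BMTB] assoc_mult_mat[OF M TAc BMTB] by simp
  also have "\<dots> = A * (M * (D * (M * TB)))" using cD[OF MTB] by simp
  finally have "tr (P * Q) = tr (A * (M * (D * (M * TB))))" by simp
  also have "\<dots> = tr ((M * (D * (M * TB))) * A)"
    by (rule tr_comm[OF A]) (rule mult_carrier_mat[OF M DMTB])
  also have "(M * (D * (M * TB))) * A = M * (D * (M * (TB * A)))"
    using assoc_mult_mat[OF M DMTB A] assoc_mult_mat[OF Dc MTB A] assoc_mult_mat[OF M TBc A] by simp
  finally have PQ: "tr (P * Q) = tr (M * (D * (M * TD)))" unfolding TD_def .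
  have "Q * P = B * (M * (TB * (A * (M * TA))))" unfolding P_def Q_def
    using assoc_mult_mat[OF B MTB AMTA] assoc_mult_mat[OF M TBc AMTA] by simp
  also have "\<dots> = B * (M * (TD * (M * TA)))" using cTD[OF MTA] by simp
  finally have "tr (Q * P) = tr (B * (M * (TD * (M * TA))))" by simp
  also have "\<dots> = tr ((M * (TD * (M * TA))) * B)"
    by (rule tr_comm[OF B]) (rule mult_carrier_mat[OF M TDMTA])
  also have "(M * (TD * (M * TA))) * B = M * (TD * (M * (TA * B)))"
    using assoc_mult_mat[OF M TDMTA B] assoc_mult_mat[OF TDc MTA B] assoc_mult_mat[OF M TAc B] by simp
  finally have QP: "tr (Q * P) = tr (M * (TD * (M * D)))" unfolding D_def .
  have trMM: "tr (M * M) = (\<Sum>i<l. \<Sum>p<l. (M $$ (i,p))^2)"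
    using M by (simp add: tr_mult[of _ l l] symM power2_eq_square)
  have "tr (M * (D * (M * TD))) = (\<Sum>i<l. \<Sum>p<l. M $$ (i,p) * D $$ (p,p) * M $$ (p,i) * TD $$ (i,i))"
    by (rule tr_diag4[OF M M Dc Dd TDc TDd])
  also have "\<dots> = (\<Sum>i<l. \<Sum>p<l. (M $$ (i,p))^2 * (d i * d p))"
    by (intro sum.cong refl) (simp add: TDi d_def symM power2_eq_square)
  finally have PQ': "tr (P * Q) = (\<Sum>i<l. \<Sum>p<l. (M $$ (i,p))^2 * (d i * d p))" using PQ by simp
  have "tr (M * (TD * (M * D))) = (\<Sum>i<l. \<Sum>p<l. M $$ (i,p) * TD $$ (p,p) * M $$ (p,i) * D $$ (i,i))"
    by (rule tr_diag4[OF M M TDc TDd Dc Dd])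
  also have "\<dots> = (\<Sum>i<l. \<Sum>p<l. (M $$ (i,p))^2 * (d i * d p))"
    by (intro sum.cong refl) (simp add: TDi d_def symM power2_eq_square)
  finally have QP': "tr (Q * P) = (\<Sum>i<l. \<Sum>p<l. (M $$ (i,p))^2 * (d i * d p))" using QP by simp
  define S where "S = (\<Sum>i<l. \<Sum>p<l. (M $$ (i,p))^2 * (1 - d i * d p))"
  have FX: "(frobenius_norm ?X)^2 = 2 * S"
  proof -
    have "S = (\<Sum>i<l. \<Sum>p<l. (M $$ (i,p))^2) - (\<Sum>i<l. \<Sum>p<l. (M $$ (i,p))^2 * (d i * d p))"
      unfolding S_def by (simp add: right_diff_distrib sum_subtractf)
    thus ?thesis using FX1 PP QQ PQ' QP' trMM by simp
  qed
  define Y1 where "Y1 = A * TA"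
  define Y2 where "Y2 = B * TB"
  have YY: "?Y = Y1 - Y2" unfolding Y1_def Y2_def TA_def TB_def by simp
  have Y1c: "Y1 \<in> carrier_mat m m" and Y2c: "Y2 \<in> carrier_mat m m" unfolding Y1_def Y2_def using A B TAc TBc by auto
  have TY1: "transpose_mat Y1 = Y1" unfolding Y1_def TA_def using A by (simp add: transpose_mult[of _ m l _ m])
  have TY2: "transpose_mat Y2 = Y2" unfolding Y2_def TB_def using B by (simp add: transpose_mult[of _ m l _ m])
  have "(frobenius_norm ?Y)^2 = tr ((Y1 - Y2) * (Y1 - Y2))"
    unfolding YY using frob_sq[of "Y1 - Y2" m m] minus_carrier_mat[OF Y2c] Y1c Y2c TY1 TY2 by (simp add: transpose_minus[OF Y1c Y2c])
  also have "(Y1 - Y2) * (Y1 - Y2) = (Y1 * Y1 - Y1 * Y2) - (Y2 * Y1 - Y2 * Y2)"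
    using minus_mult_distrib_mat[OF Y1c Y2c minus_carrier_mat[OF Y2c]]
      mult_minus_distrib_mat[OF Y1c Y1c Y2c] mult_minus_distrib_mat[OF Y2c Y1c Y2c] by simp
  also have "tr \<dots> = (tr (Y1 * Y1) - tr (Y1 * Y2)) - (tr (Y2 * Y1) - tr (Y2 * Y2))"
    using tr_minus[OF minus_carrier_mat[OF mult_carrier_mat[OF Y1c Y2c]] minus_carrier_mat[OF mult_carrier_mat[OF Y2c Y2c]]]
      tr_minus[OF mult_carrier_mat[OF Y1c Y1c] mult_carrier_mat[OF Y1c Y2c]]
      tr_minus[OF mult_carrier_mat[OF Y2c Y1c] mult_carrier_mat[OF Y2c Y2c]] by simp
  finally have FY1: "(frobenius_norm ?Y)^2 = (tr (Y1 * Y1) - tr (Y1 * Y2)) - (tr (Y2 * Y1) - tr (Y2 * Y2))" .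
  have ATA: "A * TA \<in> carrier_mat m m" using A TAc by (rule mult_carrier_mat)
  have BTB: "B * TB \<in> carrier_mat m m" using B TBc by (rule mult_carrier_mat)
  have "Y1 * Y1 = A * (TA * (A * TA))" unfolding Y1_def using assoc_mult_mat[OF A TAc ATA] by simp
  also have "\<dots> = A * TA" using canA[OF TAc] by simp
  finally have "tr (Y1 * Y1) = tr (A * TA)" by simp
  also have "\<dots> = tr (TA * A)" by (rule tr_comm[OF A TAc])
  finally have Y11: "tr (Y1 * Y1) = real l" using AA' by (simp add: tr_one)
  have "Y2 * Y2 = B * (TB * (B * TB))" unfolding Y2_def using assoc_mult_mat[OF B TBc BTB] by simp
  also have "\<dots> = B * TB" using canB[OF TBc] by simp
  finally have "tr (Y2 * Y2) = tr (B * TB)" by simp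
  also have "\<dots> = tr (TB * B)" by (rule tr_comm[OF B TBc])
  finally have Y22: "tr (Y2 * Y2) = real l" using BB' by (simp add: tr_one)
  have DTB: "D * TB \<in> carrier_mat l m" using Dc TBc by (rule mult_carrier_mat)
  have TDTA: "TD * TA \<in> carrier_mat l m" using TDc TAc by (rule mult_carrier_mat)
  have "Y1 * Y2 = A * (TA * (B * TB))" unfolding Y1_def Y2_def using assoc_mult_mat[OF A TAc BTB] by simp
  also have "\<dots> = A * (D * TB)" using cD[OF TBc] by simp
  finally have "tr (Y1 * Y2) = tr (A * (D * TB))" by simp
  also have "\<dots> = tr ((D * TB) * A)" by (rule tr_comm[OF A DTB])
  also have "(D * TB) * A = D * TD" unfolding TD_def using assoc_mult_mat[OF Dc TBc A] by simp
  also have "tr (D * TD) = (\<Sum>i<l. D $$ (i,i) * TD $$ (i,i))" by (rule tr_diag2[OF Dc Dd TDc TDd])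
  finally have Y12: "tr (Y1 * Y2) = (\<Sum>i<l. (d i)^2)" by (simp add: TDi d_def power2_eq_square)
  have "Y2 * Y1 = B * (TB * (A * TA))" unfolding Y1_def Y2_def using assoc_mult_mat[OF B TBc ATA] by simp
  also have "\<dots> = B * (TD * TA)" using cTD[OF TAc] by simp
  finally have "tr (Y2 * Y1) = tr (B * (TD * TA))" by simp
  also have "\<dots> = tr ((TD * TA) * B)" by (rule tr_comm[OF B TDTA])
  also have "(TD * TA) * B = TD * D" unfolding D_def using assoc_mult_mat[OF TDc TAc B] by simp
  also have "tr (TD * D) = (\<Sum>i<l. TD $$ (i,i) * D $$ (i,i))" by (rule tr_diag2[OF TDc TDd Dc Dd])
  finally have Y21: "tr (Y2 * Y1) = (\<Sum>i<l. (d i)^2)" by (simp add: TDi d_def power2_eq_square)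
  define T where "T = (\<Sum>i<l. 1 - (d i)^2)"
  have FY: "(frobenius_norm ?Y)^2 = 2 * T"
    unfolding T_def using FY1 Y11 Y22 Y12 Y21 by (simp add: sum_subtractf)
  have dge: "\<And>i. i < l \<Longrightarrow> d i \<ge> 0" using nn unfolding d_def D_def TA_def by simp
  have dle: "\<And>i. i < l \<Longrightarrow> d i \<le> 1"
  proof -
    fix i assume i: "i < l"
    have dA: "(\<Sum>k<m. (A $$ (k,i))^2) = 1"
    proof -
      have "(TA * A) $$ (i,i) = (\<Sum>k<m. TA $$ (i,k) * A $$ (k,i))" by (rule mult_entry[OF TAc A i i])
      also have "\<dots> = (\<Sum>k<m. (A $$ (k,i))^2)"
        by (intro sum.cong refl) (use A i in \<open>simp add: TA_def power2_eq_square\<close>)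
      finally show ?thesis using AA' i by simp
    qed
    have dB: "(\<Sum>k<m. (B $$ (k,i))^2) = 1"
    proof -
      have "(TB * B) $$ (i,i) = (\<Sum>k<m. TB $$ (i,k) * B $$ (k,i))" by (rule mult_entry[OF TBc B i i])
      also have "\<dots> = (\<Sum>k<m. (B $$ (k,i))^2)"
        by (intro sum.cong refl) (use B i in \<open>simp add: TB_def power2_eq_square\<close>)
      finally show ?thesis using BB' i by simp
    qed
    have "d i = (\<Sum>k<m. TA $$ (i,k) * B $$ (k,i))" unfolding d_def D_def by (rule mult_entry[OF TAc B i i])
    also have "\<dots> = (\<Sum>k<m. A $$ (k,i) * B $$ (k,i))"
      by (intro sum.cong refl) (use A i in \<open>simp add: TA_def\<close>)
    also have "\<dots> \<le> (\<Sum>k<m. ((A $$ (k,i))^2 + (B $$ (k,i))^2) / 2)"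
    proof (rule sum_mono)
      fix k
      have "0 \<le> (A $$ (k,i) - B $$ (k,i))^2" by simp
      thus "A $$ (k,i) * B $$ (k,i) \<le> ((A $$ (k,i))^2 + (B $$ (k,i))^2) / 2"
        by (simp add: power2_eq_square algebra_simps)
    qed
    also have "\<dots> = 1" using dA dB by (simp add: sum_divide_distrib[symmetric] sum.distrib)
    finally show "d i \<le> 1" .
  qed
  have Tnn: "T \<ge> 0" unfolding T_def
  proof (rule sum_nonneg)
    fix i assume "i \<in> {..<l}"
    hence "(d i)^2 \<le> 1" using dge dle by (simp add: power_le_one)
    thus "0 \<le> 1 - (d i)^2" by simp
  qed
  have "S \<le> (\<Sum>i<l. \<Sum>p<l. (M $$ (i,p))^2 * ((1 - (d i)^2) + (1 - (d p)^2)))"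
    unfolding S_def
  proof (intro sum_mono mult_left_mono)
    fix i p assume "i \<in> {..<l}" "p \<in> {..<l}"
    thus "1 - d i * d p \<le> (1 - (d i)^2) + (1 - (d p)^2)"
      using pw[of "d i" "d p"] dge dle by simp
  qed simp
  also have "\<dots> = (\<Sum>i<l. \<Sum>p<l. (M $$ (i,p))^2 * (1 - (d i)^2)) + (\<Sum>i<l. \<Sum>p<l. (M $$ (i,p))^2 * (1 - (d p)^2))"
    by (simp only: sum.distrib[symmetric] distrib_left)
  also have "(\<Sum>i<l. \<Sum>p<l. (M $$ (i,p))^2 * (1 - (d p)^2)) = (\<Sum>i<l. \<Sum>p<l. (M $$ (i,p))^2 * (1 - (d i)^2))"
    by (subst sum.swap) (intro sum.cong refl, simp add: symM)
  also have "(\<Sum>i<l. \<Sum>p<l. (M $$ (i,p))^2 * (1 - (d i)^2)) = (\<Sum>i<l. (1 - (d i)^2) * (\<Sum>p<l. (M $$ (i,p))^2))"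
    by (simp add: sum_distrib_left mult.commute)
  also have "\<dots> \<le> (\<Sum>i<l. (1 - (d i)^2) * c^2)"
  proof (rule sum_mono)
    fix i assume "i \<in> {..<l}"
    hence i: "i < l" by simp
    have "(d i)^2 \<le> 1" using dge[OF i] dle[OF i] by (simp add: power_le_one)
    thus "(1 - (d i)^2) * (\<Sum>p<l. (M $$ (i,p))^2) \<le> (1 - (d i)^2) * c^2"
      using Rb[OF i] by (intro mult_left_mono) auto
  qed
  also have "\<dots> = c^2 * T" unfolding T_def by (simp add: sum_distrib_left mult.commute)
  finally have ST: "S \<le> 2 * c^2 * T" by (simp add: mult_ac)
  have "(frobenius_norm ?X)^2 \<le> (2 * c * frobenius_norm ?Y)^2"
  proof -
    have "(frobenius_norm ?X)^2 \<le> 4 * c^2 * T" using FX ST by (simp add: mult_ac)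
    also have "\<dots> \<le> 8 * c^2 * T" using Tnn by simp
    also have "\<dots> = (2 * c * frobenius_norm ?Y)^2" using FY by (simp add: power_mult_distrib)
    finally show ?thesis .
  qed
  moreover have "0 \<le> 2 * c * frobenius_norm ?Y" using c0 unfolding frobenius_norm_def by (intro mult_nonneg_nonneg real_sqrt_ge_zero sum_nonneg) auto
  ultimately have "frobenius_norm ?X \<le> 2 * c * frobenius_norm ?Y" by (rule power2_le_imp_le)
  thus ?thesis unfolding c_def by (simp add: mult.assoc)
  qed
qed

end
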